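(* Consider the Gaussian mean estimation problem described in the context (with $\mu=0$), fix $i$, and let $\tilde G_i$ be as defined there. For any $\eta\ge0$ and any realization $Z_i^\pm=z_\pm=(z_-,z_+)\in\mathbb R^2$: if $|z_+|\ne|z_-|$, then $$\psi^{*-1}_{\tilde G_i|Z_i^\pm}(\eta,z_\pm)\le B_{z_\pm,n}(\eta):=|z_+^2-z_-^2|\sqrt{2\eta}+\frac{2\sigma^2(z_+-z_-)^2}{n|z_+^2-z_-^2|}\sqrt{2\eta}+\frac{4\max(z_+^2,z_-^2)}{n}$$ (so that $B_{z_\pm,n}(\eta)=|z_+^2-z_-^2|\sqrt{2\eta}+\Theta(1/n)$); and if $|z_+|=|z_-|$, then $$\psi^{*-1}_{\tilde G_i|Z_i^\pm}(\eta,z_\pm)\le4\sigma\sqrt{\frac{2\eta}{n}}\,|z_+|+\frac{4\max(z_+^2,z_-^2)}{n}.$$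
   Context: Gaussian mean estimation: $\mathcal Z=\mathcal W=\mathbb R$, data distribution $\xi=N(\mu,\sigma^2)$ with $\mu=0$ and $\sigma>0$, loss $\ell(w,z)=(w-z)^2$, and the algorithm outputs the average of its $n\ge2$ training samples. Supersample construction: $Z_j^-,Z_j^+$ ($j=1,\dots,n$) are $2n$ i.i.d. samples from $\xi$, $Z_j^\pm=(Z_j^-,Z_j^+)$; $R_1,\dots,R_n$ i.i.d. uniform on $\{-1,1\}$ independent of the samples; $W=\frac1n\sum_j Z_j^{R_j}$ with $Z_j^1=Z_j^+$, $Z_j^{-1}=Z_j^-$. Let $(\tilde W_i,\tilde R_i)$ be a decoupled pair of $(W,R_i)$ conditioned on $Z_i^\pm$: jointly defined with $Z_i^\pm$ so that $(\tilde W_i,Z_i^\pm)\overset{D}{=}(W,Z_i^\pm)$, $(\tilde R_i,Z_i^\pm)\overset{D}{=}(R_i,Z_i^\pm)$, and $\tilde W_i-Z_i^\pm-\tilde R_i$ is a Markov chain; and $\tilde G_i=\tilde R_i(\ell(\tilde W_i,Z_i^-)-\ell(\tilde W_i,Z_i^+))$. For random $F,U$: $\psi_{F|U}(\lambda,u)=\ln\mathbb E[e^{\lambda(F-\mathbb E[F|U=u])}\mid U=u]$ and $\psi^{*-1}_{F|U}(\eta,u)=\inf_{\lambda>0}\frac{\eta+\psi_{F|U}(\lambda,u)}{\lambda}$. *)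

theory Defs
  imports "HOL-Probability.Probability"
begin

definition gauss :: "real \<Rightarrow> real measure" where
  "gauss \<sigma> = density lborel (normal_density 0 \<sigma>)"

definition rad :: "real measure" where
  "rad = measure_pmf (pmf_of_set {-1, 1})"

text \<open>Selector: Z^1 = Z^+, Z^{-1} = Z^-; a pair is (Z^-, Z^+).\<close>
definition sel :: "real \<times> real \<Rightarrow> real \<Rightarrow> real" where
  "sel z r = (if r = 1 then snd z else fst z)"

text \<open>Supersample space: coordinates j < n carry ((Z_j^-, Z_j^+), R_j), all independent.\<close>
definition super_space :: "real \<Rightarrow> nat \<Rightarrow> (nat \<Rightarrow> (real \<times> real) \<times> real) measure" where
  "super_space \<sigma> n = PiM {..<n} (\<lambda>_. (gauss \<sigma> \<Otimes>\<^sub>M gauss \<sigma>) \<Otimes>\<^sub>M rad)"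

definition W_cond :: "nat \<Rightarrow> nat \<Rightarrow> real \<times> real \<Rightarrow> (nat \<Rightarrow> (real \<times> real) \<times> real) \<Rightarrow> real" where
  "W_cond n i z \<omega> = (1 / real n) *
     (\<Sum>j<n. if j = i then sel z (snd (\<omega> j)) else sel (fst (\<omega> j)) (snd (\<omega> j)))"

text \<open>Conditional law of W given Z_i^pm = z (= law of the decoupled W-tilde_i given Z_i^pm = z).\<close>
definition Wtilde_law :: "real \<Rightarrow> nat \<Rightarrow> nat \<Rightarrow> real \<times> real \<Rightarrow> real measure" where
  "Wtilde_law \<sigma> n i z = distr (super_space \<sigma> n) borel (W_cond n i z)"

text \<open>Conditional joint law of (W-tilde_i, R-tilde_i) given Z_i^pm = z: product, by the Markov chain
  property; R-tilde_i given Z_i^pm is uniform on {-1,1} as R_i is independent of the samples.\<close>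
definition decoupled_law :: "real \<Rightarrow> nat \<Rightarrow> nat \<Rightarrow> real \<times> real \<Rightarrow> (real \<times> real) measure" where
  "decoupled_law \<sigma> n i z = Wtilde_law \<sigma> n i z \<Otimes>\<^sub>M rad"

definition loss :: "real \<Rightarrow> real \<Rightarrow> real" where
  "loss w z = (w - z)^2"

text \<open>G-tilde_i as a function of (W-tilde_i, R-tilde_i) at Z_i^pm = z = (z_-, z_+).\<close>
definition Gt :: "real \<times> real \<Rightarrow> real \<times> real \<Rightarrow> real" where
  "Gt z p = snd p * (loss (fst p) (fst z) - loss (fst p) (snd z))"

definition psi :: "real \<Rightarrow> nat \<Rightarrow> nat \<Rightarrow> real \<Rightarrow> real \<times> real \<Rightarrow> real" where
  "psi \<sigma> n i l z =
     ln (\<integral>p. exp (l * (Gt z p - (\<integral>q. Gt z q \<partial>decoupled_law \<sigma> n i z))) \<partial>decoupled_law \<sigma> n i z)"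

definition psi_star_inv :: "real \<Rightarrow> nat \<Rightarrow> nat \<Rightarrow> real \<Rightarrow> real \<times> real \<Rightarrow> real" where
  "psi_star_inv \<sigma> n i \<eta> z = (INF l\<in>{0<..}. (\<eta> + psi \<sigma> n i l z) / l)"

end

theory Submission
  imports Defs
begin


lemma prob_gauss: "s > 0 \<Longrightarrow> prob_space (gauss s)"
  unfolding gauss_def by (rule prob_space_normal_density)

lemma sets_gauss[simp, measurable_cong]: "sets (gauss s) = sets borel"
  unfolding gauss_def by simp

lemma prob_rad: "prob_space rad"
  unfolding rad_def by (rule prob_space_measure_pmf)

lemma sets_rad[simp]: "sets rad = UNIV"
  unfolding rad_def by simp

lemma space_rad[simp]: "space rad = UNIV"
  unfolding rad_def by simp

lemma nn_rad: "(\<integral>\<^sup>+r. f r \<partial>rad) = (f 1 + f (-1)) / 2"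
  unfolding rad_def by (subst nn_integral_pmf_of_set) (auto simp: add.commute)

lemma gauss_mgf:
  assumes "s > 0"
  shows "(\<integral>\<^sup>+x. ennreal (exp (u*x)) \<partial>gauss s) = ennreal (exp (u^2 * s^2 / 2))"
proof -
  have eq: "normal_density 0 s x * exp (u*x) = exp (u^2 * s^2 / 2) * normal_density (u * s^2) s x" for x
  proof -
    have "-((x - 0)^2) / (2* s^2) + u*x = u^2* s^2/2 + (-((x - u * s^2)^2) / (2* s^2))"
      using assms by (simp add: field_simps power2_eq_square)
    then show ?thesis unfolding normal_density_def
      by (simp add: exp_add[symmetric] mult.commute mult.left_commute)
  qed
  have "(\<integral>\<^sup>+x. ennreal (exp (u*x)) \<partial>gauss s) = (\<integral>\<^sup>+x. ennreal (normal_density 0 s x) * ennreal (exp (u*x)) \<partial>lborel)"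
    unfolding gauss_def by (subst nn_integral_density) auto
  also have "\<dots> = (\<integral>\<^sup>+x. ennreal (exp (u^2 * s^2 / 2)) * ennreal (normal_density (u * s^2) s x) \<partial>lborel)"
    by (intro nn_integral_cong) (simp add: eq[symmetric] ennreal_mult[symmetric] normal_density_nonneg)
  also have "\<dots> = ennreal (exp (u^2 * s^2 / 2)) * (\<integral>\<^sup>+x. ennreal (normal_density (u * s^2) s x) \<partial>lborel)"
    by (subst nn_integral_cmult) auto
  also have "(\<integral>\<^sup>+x. ennreal (normal_density (u * s^2) s x) \<partial>lborel) = 1"
  proof -
    interpret prob_space "density lborel (normal_density (u * s^2) s)"
      using prob_space_normal_density assms by blast
    show ?thesis using emeasure_space_1 by (simp add: emeasure_density)
  qed
  finally show ?thesis by simp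
qed


lemma ennreal_half: "x \<ge> 0 \<Longrightarrow> ennreal x / 2 = ennreal (x / 2)"
  by (metis divide_ennreal ennreal_numeral zero_less_numeral)

lemma pred_rad[measurable]: "Measurable.pred rad P"
  by (simp add: pred_def)

lemma sel_meas[measurable]:
  shows "(\<lambda>x. sel (fst x) (snd x)) \<in> borel_measurable ((gauss s \<Otimes>\<^sub>M gauss s) \<Otimes>\<^sub>M rad)"
  unfolding sel_def by measurable

lemma sel_z_meas[measurable]:
  shows "(\<lambda>x. sel z (snd x)) \<in> borel_measurable (N \<Otimes>\<^sub>M rad)"
  unfolding sel_def by measurable

definition C :: "real \<Rightarrow> ((real \<times> real) \<times> real) measure" where
  "C s = (gauss s \<Otimes>\<^sub>M gauss s) \<Otimes>\<^sub>M rad"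

lemma prob_C: "s > 0 \<Longrightarrow> prob_space (C s)"
  unfolding C_def by (intro prob_space_pair prob_gauss prob_rad) auto

lemma coord_other:
  assumes "s > 0"
  shows "(\<integral>\<^sup>+x. ennreal (exp (u * sel (fst x) (snd x))) \<partial>C s) = ennreal (exp (u^2 * s^2 / 2))"
proof -
  interpret R: prob_space rad by (rule prob_rad)
  interpret G: prob_space "gauss s" by (rule prob_gauss[OF assms])
  interpret GG: prob_space "gauss s \<Otimes>\<^sub>M gauss s" by (intro prob_space_pair prob_gauss assms)
  have "(\<integral>\<^sup>+x. ennreal (exp (u * sel (fst x) (snd x))) \<partial>C s)
     = (\<integral>\<^sup>+x. \<integral>\<^sup>+r. ennreal (exp (u * sel x r)) \<partial>rad \<partial>(gauss s \<Otimes>\<^sub>M gauss s))"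
    unfolding C_def by (subst R.nn_integral_fst[symmetric]) (auto intro!: measurable_compose[OF sel_meas])
  also have "\<dots> = (\<integral>\<^sup>+x. (ennreal (exp (u * snd x)) + ennreal (exp (u * fst x))) / 2 \<partial>(gauss s \<Otimes>\<^sub>M gauss s))"
    by (simp add: nn_rad sel_def)
  also have "\<dots> = ((\<integral>\<^sup>+x. ennreal (exp (u * snd x)) \<partial>(gauss s \<Otimes>\<^sub>M gauss s)) + (\<integral>\<^sup>+x. ennreal (exp (u * fst x)) \<partial>(gauss s \<Otimes>\<^sub>M gauss s))) / 2"
    by (simp add: divide_ennreal_def nn_integral_multc nn_integral_add)
  also have "(\<integral>\<^sup>+x. ennreal (exp (u * snd x)) \<partial>(gauss s \<Otimes>\<^sub>M gauss s)) = ennreal (exp (u^2 * s^2 / 2))"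
    by (subst G.nn_integral_fst[symmetric]) (auto simp: gauss_mgf[OF assms] G.emeasure_space_1)
  also have "(\<integral>\<^sup>+x. ennreal (exp (u * fst x)) \<partial>(gauss s \<Otimes>\<^sub>M gauss s)) = ennreal (exp (u^2 * s^2 / 2))"
    by (subst G.nn_integral_fst[symmetric]) (auto simp: gauss_mgf[OF assms] G.emeasure_space_1)
  finally show ?thesis
    by (simp add: ennreal_plus[symmetric] ennreal_half del: ennreal_plus)
qed

lemma coord_i:
  assumes "s > 0"
  shows "(\<integral>\<^sup>+x. ennreal (exp (u * sel z (snd x))) \<partial>C s) = ennreal ((exp (u * snd z) + exp (u * fst z)) / 2)"
proof -
  interpret R: prob_space rad by (rule prob_rad)
  interpret GG: prob_space "gauss s \<Otimes>\<^sub>M gauss s" by (intro prob_space_pair prob_gauss assms)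
  have "(\<integral>\<^sup>+x. ennreal (exp (u * sel z (snd x))) \<partial>C s)
     = (\<integral>\<^sup>+x. \<integral>\<^sup>+r. ennreal (exp (u * sel z r)) \<partial>rad \<partial>(gauss s \<Otimes>\<^sub>M gauss s))"
    unfolding C_def by (subst R.nn_integral_fst[symmetric]) auto
  also have "\<dots> = (\<integral>\<^sup>+x. ennreal (exp (u * snd z) + exp (u * fst z)) / 2 \<partial>(gauss s \<Otimes>\<^sub>M gauss s))"
    by (simp add: nn_rad sel_def ennreal_plus[symmetric] del: ennreal_plus)
  also have "\<dots> = ennreal ((exp (u * snd z) + exp (u * fst z)) / 2)"
    using ennreal_half[of "exp (u * snd z) + exp (u * fst z)"]
    by (simp add: GG.emeasure_space_1 add_nonneg_nonneg)
  finally show ?thesis .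
qed


lemma W_mgf:
  assumes "s > 0" "i < n"
  shows "(\<integral>\<^sup>+\<omega>. ennreal (exp (t * W_cond n i z \<omega>)) \<partial>super_space s n)
    = ennreal ((exp (t / n * snd z) + exp (t / n * fst z)) / 2 * exp ((t / n)^2 * s^2 / 2) ^ (n - 1))"
proof -
  have ss: "super_space s n = PiM {..<n} (\<lambda>_. C s)" by (simp add: super_space_def C_def)
  interpret P: product_sigma_finite "\<lambda>_. C s"
    unfolding product_sigma_finite_def
    using prob_C[OF assms(1)] prob_space_imp_sigma_finite by blast
  define g where "g j x = (if j = i then sel z (snd x) else sel (fst x) (snd x))" for j x
  have gm: "g j \<in> borel_measurable (C s)" for j
    unfolding g_def C_def by (cases "j = i") simp_all
  have e: "ennreal (exp (t * W_cond n i z \<omega>)) = (\<Prod>j\<in>{..<n}. ennreal (exp (t / n * g j (\<omega> j))))" for \<omega>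
  proof -
    have "t * W_cond n i z \<omega> = (\<Sum>j<n. t / n * g j (\<omega> j))"
      by (simp add: W_cond_def sum_distrib_left g_def)
    then have "exp (t * W_cond n i z \<omega>) = (\<Prod>j<n. exp (t / n * g j (\<omega> j)))"
      by (simp add: exp_sum)
    then show ?thesis by (simp add: prod_ennreal)
  qed
  have "(\<integral>\<^sup>+\<omega>. ennreal (exp (t * W_cond n i z \<omega>)) \<partial>super_space s n)
      = (\<Prod>j\<in>{..<n}. \<integral>\<^sup>+x. ennreal (exp (t / n * g j x)) \<partial>C s)"
    unfolding ss e by (rule P.product_nn_integral_prod) (auto intro!: measurable_compose[OF gm] measurable_ennreal)
  also have "\<dots> = (\<integral>\<^sup>+x. ennreal (exp (t / n * g i x)) \<partial>C s) *
      (\<Prod>j\<in>{..<n}-{i}. \<integral>\<^sup>+x. ennreal (exp (t / n * g j x)) \<partial>C s)"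
    using assms(2) by (subst prod.remove[of _ i]) auto
  also have "(\<integral>\<^sup>+x. ennreal (exp (t / n * g i x)) \<partial>C s) = ennreal ((exp (t / n * snd z) + exp (t / n * fst z)) / 2)"
    unfolding g_def using coord_i[OF assms(1), of "t / n" z] by simp
  also have "(\<Prod>j\<in>{..<n}-{i}. \<integral>\<^sup>+x. ennreal (exp (t / n * g j x)) \<partial>C s)
      = (\<Prod>j\<in>{..<n}-{i}. ennreal (exp ((t / n)^2 * s^2 / 2)))"
    using coord_other[OF assms(1), of "t / n"] by (intro prod.cong refl) (simp add: g_def)
  also have "\<dots> = ennreal (exp ((t / n)^2 * s^2 / 2)) ^ (n - 1)"
    using assms(2) by simp
  finally show ?thesis
    by (simp add: ennreal_mult[symmetric] ennreal_power add_nonneg_nonneg)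
qed


lemma rad_meas[measurable]: "(\<lambda>p. f (snd p)) \<in> borel_measurable (M \<Otimes>\<^sub>M rad)"
proof -
  have "f \<in> borel_measurable rad" by (auto simp: measurable_def)
  then show ?thesis by (rule measurable_compose[OF measurable_snd])
qed

lemma W_meas[measurable]: "W_cond n i z \<in> borel_measurable (super_space s n)"
  unfolding super_space_def W_cond_def by measurable

lemma prob_Wt: "s > 0 \<Longrightarrow> prob_space (Wtilde_law s n i z)"
  unfolding Wtilde_law_def
proof (rule prob_space.prob_space_distr)
  assume "s > 0"
  then show "prob_space (super_space s n)"
    unfolding super_space_def by (intro prob_space_PiM prob_C[unfolded C_def])
qed simp

lemma sets_Wt[simp, measurable_cong]: "sets (Wtilde_law s n i z) = sets borel"
  by (simp add: Wtilde_law_def)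

lemma Gt_eq: "Gt (zm, zp) (w, r) = r * (2 * (zp - zm) * w - (zp^2 - zm^2))"
  by (simp add: Gt_def loss_def power2_eq_square algebra_simps)

lemma Gt_meas[measurable]: "Gt z \<in> borel_measurable (Wtilde_law s n i z' \<Otimes>\<^sub>M rad)"
  unfolding Gt_def loss_def by measurable

lemma rad_any: "f \<in> measurable rad rad" by (auto simp: measurable_def)

lemma rad_neg_snd[measurable]: "(\<lambda>x. - snd x) \<in> measurable (M \<Otimes>\<^sub>M rad) rad"
  by (rule measurable_compose[OF measurable_snd rad_any])

lemma rad_flip: "distr rad rad uminus = rad"
proof -
  have "distr rad rad uminus = distr rad (count_space UNIV) uminus"
    by (rule distr_cong) auto
  also have "\<dots> = measure_pmf (map_pmf uminus (pmf_of_set {-1, 1::real}))"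
    by (simp add: map_pmf_rep_eq rad_def)
  also have "map_pmf uminus (pmf_of_set {-1, 1::real}) = pmf_of_set {-1, 1}"
    by (subst map_pmf_of_set_inj) (auto simp: insert_commute)
  finally show ?thesis by (simp add: rad_def)
qed

lemma mean_zero:
  assumes "s > 0"
  shows "(\<integral>q. Gt z q \<partial>decoupled_law s n i z) = 0"
proof -
  let ?W = "Wtilde_law s n i z"
  interpret R: prob_space rad by (rule prob_rad)
  interpret W: prob_space ?W by (rule prob_Wt[OF assms])
  have "distr ?W ?W (\<lambda>x. x) \<Otimes>\<^sub>M distr rad rad uminus = distr (?W \<Otimes>\<^sub>M rad) (?W \<Otimes>\<^sub>M rad) (\<lambda>(x, y). (x, - y))"
    by (rule pair_measure_distr) (auto simp: rad_flip R.sigma_finite_measure_axioms measurable_def)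
  then have fl: "distr (decoupled_law s n i z) (decoupled_law s n i z) (\<lambda>(x, y). (x, - y)) = decoupled_law s n i z"
    by (simp add: rad_flip decoupled_law_def)
  have Gm: "(\<lambda>(x, y). (x, - y)) \<in> measurable (decoupled_law s n i z) (decoupled_law s n i z)"
    unfolding decoupled_law_def by measurable
  have "(\<integral>q. Gt z q \<partial>decoupled_law s n i z) = (\<integral>q. Gt z ((\<lambda>(x, y). (x, - y)) q) \<partial>decoupled_law s n i z)"
    by (subst fl[symmetric], subst integral_distr[OF Gm]) (auto simp: decoupled_law_def)
  also have "\<dots> = (\<integral>q. - Gt z q \<partial>decoupled_law s n i z)"
    by (intro Bochner_Integration.integral_cong refl) (auto simp: Gt_def)
  finally show ?thesis by simp
qed


definition Amgf :: "real \<Rightarrow> nat \<Rightarrow> real \<Rightarrow> real \<Rightarrow> real \<Rightarrow> real" where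
  "Amgf s n zm zp t = (exp (t / n * zp) + exp (t / n * zm)) / 2 * exp ((t / n)^2 * s^2 / 2) ^ (n - 1)"

lemma Amgf_nonneg: "Amgf s n zm zp t \<ge> 0"
  unfolding Amgf_def by (intro mult_nonneg_nonneg divide_nonneg_pos add_nonneg_nonneg) auto

lemma mgf_dec:
  fixes zm zp l :: real
  assumes "s > 0" "i < n"
  defines "a \<equiv> zp - zm" and "D \<equiv> zp^2 - zm^2"
  shows "(\<integral>\<^sup>+p. ennreal (exp (l * Gt (zm, zp) p)) \<partial>decoupled_law s n i (zm, zp))
    = ennreal ((exp (- (l * D)) * Amgf s n zm zp (2 * l * a) + exp (l * D) * Amgf s n zm zp (- (2 * l * a))) / 2)"
proof -
  let ?W = "Wtilde_law s n i (zm, zp)"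
  interpret R: prob_space rad by (rule prob_rad)
  have f1: "exp (l * Gt (zm, zp) (w, 1)) = exp (- (l * D)) * exp ((2 * l * a) * w)" for w
    by (simp add: Gt_eq a_def D_def exp_add[symmetric] algebra_simps)
  have f2: "exp (l * Gt (zm, zp) (w, -1)) = exp (l * D) * exp ((- (2 * l * a)) * w)" for w
    by (simp add: Gt_eq a_def D_def exp_add[symmetric] algebra_simps)
  have "(\<integral>\<^sup>+p. ennreal (exp (l * Gt (zm, zp) p)) \<partial>decoupled_law s n i (zm, zp))
      = (\<integral>\<^sup>+w. \<integral>\<^sup>+r. ennreal (exp (l * Gt (zm, zp) (w, r))) \<partial>rad \<partial>?W)"
    unfolding decoupled_law_def by (subst R.nn_integral_fst[symmetric]) auto
  also have "\<dots> = (\<integral>\<^sup>+w. (ennreal (exp (- (l * D))) * ennreal (exp ((2 * l * a) * w))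
        + ennreal (exp (l * D)) * ennreal (exp ((- (2 * l * a)) * w))) / 2 \<partial>?W)"
    by (simp only: nn_rad f1 f2 ennreal_mult exp_ge_zero)
  also have "\<dots> = (\<integral>\<^sup>+\<omega>. (ennreal (exp (- (l * D))) * ennreal (exp ((2 * l * a) * W_cond n i (zm, zp) \<omega>))
        + ennreal (exp (l * D)) * ennreal (exp ((- (2 * l * a)) * W_cond n i (zm, zp) \<omega>))) / 2 \<partial>super_space s n)"
    unfolding Wtilde_law_def by (subst nn_integral_distr) auto
  also have "\<dots> = (ennreal (exp (- (l * D))) * (\<integral>\<^sup>+\<omega>. ennreal (exp ((2 * l * a) * W_cond n i (zm, zp) \<omega>)) \<partial>super_space s n)
        + ennreal (exp (l * D)) * (\<integral>\<^sup>+\<omega>. ennreal (exp ((- (2 * l * a)) * W_cond n i (zm, zp) \<omega>)) \<partial>super_space s n)) / 2"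
    by (simp add: divide_ennreal_def nn_integral_multc nn_integral_add nn_integral_cmult)
  also have "\<dots> = (ennreal (exp (- (l * D))) * ennreal (Amgf s n zm zp (2 * l * a))
        + ennreal (exp (l * D)) * ennreal (Amgf s n zm zp (- (2 * l * a)))) / 2"
    by (simp only: W_mgf[OF assms(1,2)] Amgf_def fst_conv snd_conv)
  also have "\<dots> = ennreal ((exp (- (l * D)) * Amgf s n zm zp (2 * l * a) + exp (l * D) * Amgf s n zm zp (- (2 * l * a))) / 2)"
    by (simp add: ennreal_mult[symmetric] ennreal_plus[symmetric] ennreal_half Amgf_nonneg del: ennreal_plus)
  finally show ?thesis .
qed




lemma cosh_le: "(exp (y::real) + exp (- y)) / 2 \<le> exp (y^2 / 2)"
proof -
  define h where "h = 2 * \<bar>y\<bar>"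
  have h0: "h \<ge> 0" by (simp add: h_def)
  have L: "- h * (1/2) + ln (1 + (1/2) * (exp h - 1)) \<le> h^2 / 8"
    using Hoeffdings_lemma_aux[OF h0, of "1/2"] by simp
  have ey: "exp y + exp (- y) = exp \<bar>y\<bar> + exp (- \<bar>y\<bar>)" by (cases "y \<ge> 0") auto
  have "(exp y + exp (- y)) / 2 = exp (- h * (1/2)) * (1 + (1/2) * (exp h - 1))"
    unfolding ey h_def by (simp add: field_simps exp_add[symmetric] exp_diff)
  also have "\<dots> = exp (- h * (1/2) + ln (1 + (1/2) * (exp h - 1)))"
  proof -
    have pos: "0 < 1 + (1/2) * (exp h - 1)" using exp_gt_zero[of h] by (simp add: field_simps add_pos_pos)
    show ?thesis by (simp only: exp_add exp_ln[OF pos])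
  qed
  also have "\<dots> \<le> exp (h^2 / 8)" using L by simp
  also have "h^2 / 8 = y^2 / 2" by (simp add: h_def power2_eq_square)
  finally show ?thesis .
qed

lemma cosh_shift: "(exp ((y::real) + e) + exp (- (y + e))) / 2 \<le> (exp y + exp (- y)) / 2 * exp \<bar>e\<bar>"
proof -
  have "exp e \<le> exp \<bar>e\<bar>" "exp (- e) \<le> exp \<bar>e\<bar>" by simp_all
  then have "exp y * exp e + exp (- y) * exp (- e) \<le> exp y * exp \<bar>e\<bar> + exp (- y) * exp \<bar>e\<bar>"
    by (intro add_mono mult_left_mono) auto
  then show ?thesis by (simp add: exp_add[symmetric] algebra_simps)
qed

lemma cosh_ge: "1 \<le> (exp (y::real) + exp (- y)) / 2"
proof -
  have "0 \<le> (exp (y/2) - exp (- y/2))^2" by simp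
  also have "(exp (y/2) - exp (- y/2))^2 = exp y + exp (- y) - 2"
    by (simp add: power2_eq_square algebra_simps exp_add[symmetric])
  finally show ?thesis by simp
qed

lemma absmul_le: "(x::real)^2 \<le> M \<Longrightarrow> y^2 \<le> M \<Longrightarrow> \<bar>x\<bar> * \<bar>y\<bar> \<le> M"
proof -
  assume "x^2 \<le> M" "y^2 \<le> M"
  moreover have "2 * (\<bar>x\<bar> * \<bar>y\<bar>) \<le> x^2 + y^2"
  proof -
    have "0 \<le> (\<bar>x\<bar> - \<bar>y\<bar>)^2" by simp
    also have "\<dots> = x^2 + y^2 - 2 * (\<bar>x\<bar> * \<bar>y\<bar>)" by (simp add: power2_diff)
    finally show ?thesis by simp
  qed
  ultimately show ?thesis by simp
qed


lemma inf_bound: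
  fixes F :: "real \<Rightarrow> real" and \<eta> K E :: real
  assumes F0: "\<And>l. l > 0 \<Longrightarrow> 0 \<le> F l"
    and Fb: "\<And>l. l > 0 \<Longrightarrow> F l \<le> \<eta> / l + l * K + E"
    and "\<eta> \<ge> 0" "K \<ge> 0"
  shows "(INF l\<in>{0<..}. F l) \<le> E + 2 * sqrt (\<eta> * K)"
proof -
  have bdd: "bdd_below (F ` {0<..})"
    by (rule bdd_belowI[of _ 0]) (auto intro: F0)
  have low: "(INF l\<in>{0<..}. F l) \<le> F l" if "l > 0" for l
    by (rule cINF_lower[OF bdd]) (use that in auto)
  show ?thesis
  proof (cases "\<eta> > 0 \<and> K > 0")
    case True
    define l0 where "l0 = sqrt (\<eta> / K)"
    have l0: "l0 > 0" using True by (simp add: l0_def)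
    have sK: "sqrt K > 0" "sqrt \<eta> > 0" using True by auto
    have l0': "l0 = sqrt \<eta> / sqrt K" unfolding l0_def by (simp add: real_sqrt_divide)
    have sq: "sqrt (\<eta> * K) = sqrt \<eta> * sqrt K" by (simp add: real_sqrt_mult)
    have ee: "\<eta> = sqrt \<eta> * sqrt \<eta>" "K = sqrt K * sqrt K" using True by simp_all
    have "\<eta> / l0 = sqrt (\<eta> * K)"
      unfolding l0' sq using sK by (subst (1) ee(1)) (simp add: field_simps)
    moreover have "l0 * K = sqrt (\<eta> * K)"
      unfolding l0' sq using sK by (subst (2) ee(2)) (simp add: field_simps)
    ultimately show ?thesis using low[OF l0] Fb[OF l0] by linarith
  next
    case False
    then have z: "\<eta> * K = 0" using assms(3,4) by auto
    have "(INF l\<in>{0<..}. F l) \<le> E + e" if e: "e > 0" for e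
    proof (cases "\<eta> = 0")
      case True
      define l where "l = e / (K + 1)"
      have l: "l > 0" using e assms(4) by (simp add: l_def)
      have "l * K \<le> e" using e assms(4) unfolding l_def by (simp add: field_simps)
      then show ?thesis using low[OF l] Fb[OF l] True by simp
    next
      case False
      then have K: "K = 0" using z by simp
      define l where "l = (\<eta> + 1) / e"
      have l: "l > 0" using e assms(3) by (simp add: l_def)
      have "\<eta> / l \<le> e" using e assms(3) unfolding l_def by (simp add: field_simps)
      then show ?thesis using low[OF l] Fb[OF l] K by simp
    qed
    then have "(INF l\<in>{0<..}. F l) \<le> E" by (rule field_le_epsilon)
    then show ?thesis using z by auto
  qed
qed

lemma V_bounds:
  fixes l s zm zp :: real and n :: nat
  assumes "s > 0" "n \<ge> 1" "l > 0"
  defines "a \<equiv> zp - zm" and "D \<equiv> zp^2 - zm^2" and "M \<equiv> max (zp^2) (zm^2)"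
  defines "V \<equiv> (exp (- (l * D)) * Amgf s n zm zp (2 * l * a) + exp (l * D) * Amgf s n zm zp (- (2 * l * a))) / 2"
  shows "1 \<le> V \<and> ln V \<le> l^2 * (D^2 / 2 + 2 * a^2 * s^2 / n) + l * (4 * M / n)"
proof -
  define t where "t = 2 * l * a / n"
  define Q where "Q = exp ((2 * l * a / n)^2 * s^2 / 2) ^ (n - 1)"
  define ck where "ck x = (exp x + exp (- x)) / 2" for x :: real
  define x1 where "x1 = - (l * D) + t * zm"
  define x2 where "x2 = - (l * D) + t * zp"
  have A1: "Amgf s n zm zp (2 * l * a) = (exp (t * zp) + exp (t * zm)) / 2 * Q"
    by (simp add: Amgf_def t_def Q_def)
  have A2: "Amgf s n zm zp (- (2 * l * a)) = (exp (- (t * zp)) + exp (- (t * zm))) / 2 * Q"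
    by (simp add: Amgf_def t_def Q_def)
  have e1: "exp x1 = exp (- (l * D)) * exp (t * zm)" by (simp add: x1_def exp_add[symmetric])
  have e1': "exp (- x1) = exp (l * D) * exp (- (t * zm))" by (simp add: x1_def exp_add[symmetric])
  have e2: "exp x2 = exp (- (l * D)) * exp (t * zp)" by (simp add: x2_def exp_add[symmetric])
  have e2': "exp (- x2) = exp (l * D) * exp (- (t * zp))" by (simp add: x2_def exp_add[symmetric])
  have VQ: "V = Q * ((ck x1 + ck x2) / 2)"
    unfolding V_def A1 A2 ck_def e1 e1' e2 e2' by (simp add: algebra_simps add_divide_distrib)
  have Qe: "Q = exp (real (n - 1) * ((2 * l * a / n)^2 * s^2 / 2))"
    unfolding Q_def by (simp only: exp_of_nat_mult)
  have Q1: "1 \<le> Q" unfolding Qe by simp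
  have "real (n - 1) * ((2 * l * a / n)^2 * s^2 / 2) = (2 * l^2 * a^2 * s^2) * (real n - 1) / (real n)^2"
    using assms(2) by (simp add: power_divide power_mult_distrib of_nat_diff field_simps)
  also have "\<dots> \<le> (2 * l^2 * a^2 * s^2) / n"
  proof -
    have n: "real n \<ge> 1" using assms(2) by simp
    have "(real n - 1) / (real n)^2 \<le> 1 / real n"
      using n by (simp add: field_simps power2_eq_square)
    have "0 \<le> 2 * l^2 * a^2 * s^2" by simp
    from mult_left_mono[OF \<open>(real n - 1) / (real n)^2 \<le> 1 / real n\<close> this]
    show ?thesis by simp
  qed
  finally have Qle: "ln Q \<le> 2 * a^2 * s^2 / n * l^2" unfolding Qe by (simp add: field_simps)
  have ckge: "1 \<le> ck x" for x unfolding ck_def by (rule cosh_ge)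
  have ckpos: "0 < ck x" for x using ckge[of x] by simp
  have tb: "\<bar>t * z\<bar> \<le> l * (4 * M / n)" if "z^2 \<le> M" for z
  proof -
    have "zp^2 \<le> M" "zm^2 \<le> M" by (auto simp: M_def)
    then have "\<bar>zp\<bar> * \<bar>z\<bar> \<le> M" "\<bar>zm\<bar> * \<bar>z\<bar> \<le> M" using absmul_le that by blast+
    moreover have "\<bar>a\<bar> * \<bar>z\<bar> \<le> (\<bar>zp\<bar> + \<bar>zm\<bar>) * \<bar>z\<bar>"
      unfolding a_def by (intro mult_right_mono abs_triangle_ineq4) simp
    ultimately have "\<bar>a\<bar> * \<bar>z\<bar> \<le> 2 * M" by (simp add: distrib_right)
    moreover have "\<bar>t * z\<bar> = 2 * l / n * (\<bar>a\<bar> * \<bar>z\<bar>)"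
      using assms(3) by (simp add: t_def abs_mult)
    ultimately show ?thesis using assms(2,3)
      by (simp add: field_simps mult_left_mono)
  qed
  have ckb: "ck (- (l * D) + t * z) \<le> exp ((l * D)^2 / 2 + l * (4 * M / n))" if "z^2 \<le> M" for z
  proof -
    have "ck (- (l * D) + t * z) \<le> ck (- (l * D)) * exp \<bar>t * z\<bar>"
      unfolding ck_def by (rule cosh_shift)
    also have "\<dots> \<le> exp ((- (l * D))^2 / 2) * exp (l * (4 * M / n))"
    proof (rule mult_mono)
      show "ck (- (l * D)) \<le> exp ((- (l * D))^2 / 2)" unfolding ck_def by (rule cosh_le)
      show "exp \<bar>t * z\<bar> \<le> exp (l * (4 * M / n))" using tb[OF that] by simp
    qed simp_all
    finally show ?thesis by (simp add: exp_add)
  qed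
  have avg: "(ck x1 + ck x2) / 2 \<le> exp ((l * D)^2 / 2 + l * (4 * M / n))"
    using ckb[of zm] ckb[of zp] unfolding x1_def x2_def by (simp add: M_def)
  have avg1: "1 \<le> (ck x1 + ck x2) / 2" using ckge[of x1] ckge[of x2] by simp
  have "1 \<le> V" unfolding VQ using Q1 avg1 by (metis mult_mono' mult_1_left zero_le_one)
  moreover have "ln V \<le> l^2 * (D^2 / 2 + 2 * a^2 * s^2 / n) + l * (4 * M / n)"
  proof -
    have "ln V = ln Q + ln ((ck x1 + ck x2) / 2)"
      unfolding VQ using Q1 avg1 by (intro ln_mult_pos) simp_all
    also have "ln ((ck x1 + ck x2) / 2) \<le> (l * D)^2 / 2 + l * (4 * M / n)"
    proof -
      have "ln ((ck x1 + ck x2) / 2) \<le> ln (exp ((l * D)^2 / 2 + l * (4 * M / n)))"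
        using avg avg1 by (subst ln_le_cancel_iff) auto
      then show ?thesis by simp
    qed
    finally show ?thesis using Qle by (simp add: power_mult_distrib field_simps)
  qed
  ultimately show ?thesis by blast
qed


lemma psi_bounds:
  fixes \<sigma> l zm zp :: real and n i :: nat
  assumes "\<sigma> > 0" "n \<ge> 1" "i < n" "l > 0"
  shows "0 \<le> psi \<sigma> n i l (zm, zp) \<and>
    psi \<sigma> n i l (zm, zp) \<le> l^2 * ((zp^2 - zm^2)^2 / 2 + 2 * (zp - zm)^2 * \<sigma>^2 / n) + l * (4 * max (zp^2) (zm^2) / n)"
proof -
  define V where "V = (exp (- (l * (zp^2 - zm^2))) * Amgf \<sigma> n zm zp (2 * l * (zp - zm))
      + exp (l * (zp^2 - zm^2)) * Amgf \<sigma> n zm zp (- (2 * l * (zp - zm)))) / 2"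
  have VB: "1 \<le> V \<and> ln V \<le> l^2 * ((zp^2 - zm^2)^2 / 2 + 2 * (zp - zm)^2 * \<sigma>^2 / n) + l * (4 * max (zp^2) (zm^2) / n)"
    using V_bounds[OF assms(1,2,4), where zm=zm and zp=zp] unfolding V_def by simp
  have nn: "(\<integral>\<^sup>+p. ennreal (exp (l * Gt (zm, zp) p)) \<partial>decoupled_law \<sigma> n i (zm, zp)) = ennreal V"
    using mgf_dec[OF assms(1,3), where zm=zm and zp=zp and l=l] unfolding V_def by simp
  have meas: "(\<lambda>p. exp (l * Gt (zm, zp) p)) \<in> borel_measurable (decoupled_law \<sigma> n i (zm, zp))"
    unfolding decoupled_law_def by measurable
  have int: "integrable (decoupled_law \<sigma> n i (zm, zp)) (\<lambda>p. exp (l * Gt (zm, zp) p))"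
    by (rule integrableI_nonneg[OF meas]) (auto simp: nn)
  have "(\<integral>p. exp (l * Gt (zm, zp) p) \<partial>decoupled_law \<sigma> n i (zm, zp)) = enn2real (ennreal V)"
    by (subst integral_eq_nn_integral[OF meas]) (auto simp: nn)
  also have "\<dots> = V" using VB by simp
  finally have "psi \<sigma> n i l (zm, zp) = ln V"
    unfolding psi_def mean_zero[OF assms(1)] by simp
  then show ?thesis using VB by simp
qed

theorem lemma5:
  fixes \<sigma> \<eta> zm zp :: real and n i :: nat
  assumes "\<sigma> > 0" and "n \<ge> 2" and "i < n" and "\<eta> \<ge> 0"
  shows "(\<bar>zp\<bar> \<noteq> \<bar>zm\<bar> \<longrightarrow>
            psi_star_inv \<sigma> n i \<eta> (zm, zp) \<le>
              \<bar>zp^2 - zm^2\<bar> * sqrt (2 * \<eta>)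
              + 2 * \<sigma>^2 * (zp - zm)^2 / (real n * \<bar>zp^2 - zm^2\<bar>) * sqrt (2 * \<eta>)
              + 4 * max (zp^2) (zm^2) / real n)
       \<and> (\<bar>zp\<bar> = \<bar>zm\<bar> \<longrightarrow>
            psi_star_inv \<sigma> n i \<eta> (zm, zp) \<le>
              4 * \<sigma> * sqrt (2 * \<eta> / real n) * \<bar>zp\<bar> + 4 * max (zp^2) (zm^2) / real n)"
proof -
  define D where "D = zp^2 - zm^2"
  define a where "a = zp - zm"
  define K where "K = D^2 / 2 + 2 * a^2 * \<sigma>^2 / n"
  define E where "E = 4 * max (zp^2) (zm^2) / real n"
  have n1: "n \<ge> 1" using assms(2) by simp
  have K0: "K \<ge> 0" unfolding K_def by simp
  have main: "psi_star_inv \<sigma> n i \<eta> (zm, zp) \<le> E + 2 * sqrt (\<eta> * K)"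
    unfolding psi_star_inv_def
  proof (rule inf_bound[OF _ _ assms(4) K0])
    fix l :: real assume l: "l > 0"
    note pb = psi_bounds[OF assms(1) n1 assms(3) l, of zm zp]
    show "0 \<le> (\<eta> + psi \<sigma> n i l (zm, zp)) / l"
      using pb l assms(4) by simp
    have "(\<eta> + psi \<sigma> n i l (zm, zp)) / l = \<eta> / l + psi \<sigma> n i l (zm, zp) / l"
      by (simp add: add_divide_distrib)
    also have "psi \<sigma> n i l (zm, zp) / l \<le> (l^2 * K + l * E) / l"
      using pb l by (intro divide_right_mono) (auto simp: K_def E_def D_def a_def mult.commute mult.left_commute)
    also have "(l^2 * K + l * E) / l = l * K + E"
      using l by (simp add: field_simps power2_eq_square)
    finally show "(\<eta> + psi \<sigma> n i l (zm, zp)) / l \<le> \<eta> / l + l * K + E" by simp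
  qed
  have s1a: "sqrt (2 * \<eta>) * sqrt (2 * K) = sqrt (4 * (\<eta> * K))"
    unfolding real_sqrt_mult[symmetric] by (rule arg_cong[where f=sqrt]) simp
  have s1b: "sqrt (4 * (\<eta> * K)) = 2 * sqrt (\<eta> * K)"
    by (simp only: real_sqrt_mult real_sqrt_four)
  have s1: "2 * sqrt (\<eta> * K) = sqrt (2 * \<eta>) * sqrt (2 * K)"
    using s1a s1b by simp
  show ?thesis
  proof (intro conjI impI)
    assume ne: "\<bar>zp\<bar> \<noteq> \<bar>zm\<bar>"
    have D0: "\<bar>D\<bar> > 0"
    proof -
      have "zp^2 \<noteq> zm^2" using ne by (metis power2_abs real_sqrt_abs)
      then show ?thesis by (simp add: D_def)
    qed
    define c where "c = 2 * a^2 * \<sigma>^2 / (n * \<bar>D\<bar>)"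
    have c0: "c \<ge> 0" unfolding c_def by simp
    have "2 * K = D^2 + 2 * \<bar>D\<bar> * c"
      using D0 n1 unfolding K_def c_def by (simp add: field_simps)
    also have "\<dots> \<le> (\<bar>D\<bar> + c)^2" by (simp add: power2_eq_square algebra_simps)
    finally have "sqrt (2 * K) \<le> \<bar>D\<bar> + c"
      using c0 by (metis abs_of_nonneg add_nonneg_nonneg abs_ge_zero real_sqrt_abs real_sqrt_le_mono)
    then have "sqrt (2 * \<eta>) * sqrt (2 * K) \<le> sqrt (2 * \<eta>) * (\<bar>D\<bar> + c)"
      using assms(4) by (intro mult_left_mono) auto
    then have "psi_star_inv \<sigma> n i \<eta> (zm, zp) \<le> E + sqrt (2 * \<eta>) * (\<bar>D\<bar> + c)"
      using main s1 by linarith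
    moreover have "sqrt (2 * \<eta>) * (\<bar>D\<bar> + c) = \<bar>D\<bar> * sqrt (2 * \<eta>) + 2 * \<sigma>^2 * a^2 / (real n * \<bar>D\<bar>) * sqrt (2 * \<eta>)"
      unfolding c_def by (simp add: algebra_simps)
    ultimately show "psi_star_inv \<sigma> n i \<eta> (zm, zp) \<le>
              \<bar>zp^2 - zm^2\<bar> * sqrt (2 * \<eta>)
              + 2 * \<sigma>^2 * (zp - zm)^2 / (real n * \<bar>zp^2 - zm^2\<bar>) * sqrt (2 * \<eta>)
              + 4 * max (zp^2) (zm^2) / real n"
      unfolding E_def D_def a_def by simp
  next
    assume eq: "\<bar>zp\<bar> = \<bar>zm\<bar>"
    then have D0: "D = 0" unfolding D_def by (metis power2_abs diff_self)
    have a2: "\<bar>a\<bar> \<le> 2 * \<bar>zp\<bar>" unfolding a_def using eq abs_triangle_ineq4[of zp zm] by simp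
    have "\<eta> * K = (a^2 * \<sigma>^2) * (2 * \<eta> / n)" unfolding K_def D0 by (simp add: field_simps)
    moreover have "sqrt (a^2 * \<sigma>^2) = \<bar>a\<bar> * \<sigma>"
    proof -
      have "a^2 * \<sigma>^2 = (a * \<sigma>)^2" by (simp add: power_mult_distrib)
      then show ?thesis using assms(1) by (simp only: real_sqrt_abs) (simp add: abs_mult)
    qed
    ultimately have "sqrt (\<eta> * K) = \<bar>a\<bar> * \<sigma> * sqrt (2 * \<eta> / n)"
      by (simp only: real_sqrt_mult)
    also have "\<dots> \<le> 2 * \<bar>zp\<bar> * \<sigma> * sqrt (2 * \<eta> / n)"
      using a2 assms(1,4) by (intro mult_right_mono) auto
    finally show "psi_star_inv \<sigma> n i \<eta> (zm, zp) \<le>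
              4 * \<sigma> * sqrt (2 * \<eta> / real n) * \<bar>zp\<bar> + 4 * max (zp^2) (zm^2) / real n"
      using main unfolding E_def by (simp add: algebra_simps)
  qed
qed


end
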